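(* Let $(V,P)$ be an irreducible, reversible Markov process on a finite state space $V$ with stationary distribution $\pi$. Let $\xi\in\mathbb{R}^V$ with $\sum_{v\in V}\xi_v=0$, let $D=\mathrm{diag}(\pi)$ and $\widetilde{\xi}=D^{-1/2}\xi$. Then: (1) for every integer $t\geq 1$, $R_{\mathrm{eff}}(P;\xi)\leq t\cdot R_{\mathrm{eff}}(P^t;\xi)$; (2) if $\delta$ is the spectral gap of $P$, then $R_{\mathrm{eff}}(P;\xi)\leq \|\widetilde{\xi}\|_2^2/\delta$.
   Context: A Markov process $(V,P)$ has a row-stochastic transition matrix $P\in\mathbb{R}_{\ge 0}^{V\times V}$; it is irreducible if for all $v,w$ some power $P^t$ has $(P^t)_{vw}>0$ (then its stationary distribution $\pi=\pi P$ is unique and positive), and a process $Q$ is reversible with respect to $\pi$ if $\pi_vQ_{vw}=\pi_wQ_{wv}$ for all $v,w$ (if $P$ is, so is $P^t$). For a process $Q$ reversible with respect to $\pi$, associate the undirected graph on $V$ with an edge $\{v,w\}$ whenever $Q_{vw}>0$, with resistance $r_{\{v,w\}}=1/(\pi_vQ_{vw})$; each edge gets an arbitrary orientation. A flow is $f:E\to\mathbb{R}$ with net-flow $\delta_f(v)=\sum_{e\text{ out of }v}f_e-\sum_{e\text{ into }v}f_e$ and energy $\sum_e r_ef_e^2$. $R_{\mathrm{eff}}(Q;\xi)$ is the minimum energy of a flow with net-flow $\xi$ in this graph (taken to be $+\infty$ if no such flow exists). The spectral gap of $P$ is $\delta=1-\max\{\lambda:\lambda\text{ an eigenvalue of }P,\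 \lambda<1\}$, i.e. every eigenvalue $\lambda<1$ of $P$ satisfies $\lambda\le 1-\delta$. *)

theory Defs
  imports "HOL-Analysis.Analysis"
begin

definition mat_mul :: "('v::finite \<Rightarrow> 'v \<Rightarrow> real) \<Rightarrow> ('v \<Rightarrow> 'v \<Rightarrow> real) \<Rightarrow> 'v \<Rightarrow> 'v \<Rightarrow> real" where
  "mat_mul A B = (\<lambda>v w. \<Sum>u\<in>UNIV. A v u * B u w)"

primrec mat_pow :: "('v::finite \<Rightarrow> 'v \<Rightarrow> real) \<Rightarrow> nat \<Rightarrow> 'v \<Rightarrow> 'v \<Rightarrow> real" where
  "mat_pow A 0 = (\<lambda>v w. if v = w then 1 else 0)"
| "mat_pow A (Suc n) = mat_mul (mat_pow A n) A"

definition row_stochastic :: "('v::finite \<Rightarrow> 'v \<Rightarrow> real) \<Rightarrow> bool" where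
  "row_stochastic P \<longleftrightarrow> (\<forall>v w. P v w \<ge> 0) \<and> (\<forall>v. (\<Sum>w\<in>UNIV. P v w) = 1)"

definition irreducible :: "('v::finite \<Rightarrow> 'v \<Rightarrow> real) \<Rightarrow> bool" where
  "irreducible P \<longleftrightarrow> (\<forall>v w. \<exists>t. mat_pow P t v w > 0)"

definition stationary_dist :: "('v::finite \<Rightarrow> 'v \<Rightarrow> real) \<Rightarrow> ('v \<Rightarrow> real) \<Rightarrow> bool" where
  "stationary_dist P \<pi> \<longleftrightarrow> (\<forall>v. \<pi> v \<ge> 0) \<and> (\<Sum>v\<in>UNIV. \<pi> v) = 1 \<and>
     (\<forall>w. (\<Sum>v\<in>UNIV. \<pi> v * P v w) = \<pi> w)"

definition reversible :: "('v::finite \<Rightarrow> 'v \<Rightarrow> real) \<Rightarrow> ('v \<Rightarrow> real) \<Rightarrow> bool" where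
  "reversible Q \<pi> \<longleftrightarrow> (\<forall>v w. \<pi> v * Q v w = \<pi> w * Q w v)"

text \<open>Flows on the graph of Q: edges are the unordered pairs {v,w}, v ~= w, with Q v w > 0
  (loops carry no net flow and are omitted). A flow with an arbitrary orientation is
  represented as an antisymmetric function f (f v w is the flow from v to w along edge {v,w}),
  vanishing off edges.\<close>
definition is_flow :: "('v::finite \<Rightarrow> 'v \<Rightarrow> real) \<Rightarrow> ('v \<Rightarrow> 'v \<Rightarrow> real) \<Rightarrow> bool" where
  "is_flow Q f \<longleftrightarrow> (\<forall>v w. f v w = - f w v) \<and> (\<forall>v w. f v w \<noteq> 0 \<longrightarrow> v \<noteq> w \<and> Q v w > 0)"

definition net_flow :: "('v::finite \<Rightarrow> 'v \<Rightarrow> real) \<Rightarrow> 'v \<Rightarrow> real" where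
  "net_flow f v = (\<Sum>w\<in>UNIV. f v w)"

text \<open>Energy: sum over unordered edges of r_e f_e^2 with r_{v,w} = 1/(pi v Q v w);
  every edge appears twice among the ordered pairs, hence the factor 1/2.\<close>
definition energy :: "('v::finite \<Rightarrow> 'v \<Rightarrow> real) \<Rightarrow> ('v \<Rightarrow> real) \<Rightarrow> ('v \<Rightarrow> 'v \<Rightarrow> real) \<Rightarrow> real" where
  "energy Q \<pi> f = (1/2) * (\<Sum>(v,w)\<in>{(v,w). v \<noteq> w \<and> Q v w > 0}. (f v w)\<^sup>2 / (\<pi> v * Q v w))"

text \<open>Effective resistance; the infimum over the empty set is +infinity.\<close>
definition R_eff :: "('v::finite \<Rightarrow> 'v \<Rightarrow> real) \<Rightarrow> ('v \<Rightarrow> real) \<Rightarrow> ('v \<Rightarrow> real) \<Rightarrow> ereal" where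
  "R_eff Q \<pi> \<xi> = (INF f\<in>{f. is_flow Q f \<and> (\<forall>v. net_flow f v = \<xi> v)}. ereal (energy Q \<pi> f))"

definition is_eigenvalue :: "('v::finite \<Rightarrow> 'v \<Rightarrow> real) \<Rightarrow> real \<Rightarrow> bool" where
  "is_eigenvalue P lam \<longleftrightarrow> (\<exists>x::'v \<Rightarrow> real. (\<exists>v. x v \<noteq> 0) \<and> (\<forall>v. (\<Sum>w\<in>UNIV. P v w * x w) = lam * x v))"

definition spectral_gap :: "('v::finite \<Rightarrow> 'v \<Rightarrow> real) \<Rightarrow> real" where
  "spectral_gap P = 1 - Max {lam. is_eigenvalue P lam \<and> lam < 1}"

end

theory Submission
  imports Defs
begin

definition opP :: "('v::finite \<Rightarrow> 'v \<Rightarrow> real) \<Rightarrow> ('v \<Rightarrow> real) \<Rightarrow> 'v \<Rightarrow> real" where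
  "opP P x = (\<lambda>v. \<Sum>w\<in>UNIV. P v w * x w)"

definition ip :: "('v::finite \<Rightarrow> real) \<Rightarrow> ('v \<Rightarrow> real) \<Rightarrow> ('v \<Rightarrow> real) \<Rightarrow> real" where
  "ip \<pi> x y = (\<Sum>v\<in>UNIV. \<pi> v * x v * y v)"

definition dir :: "('v::finite \<Rightarrow> 'v \<Rightarrow> real) \<Rightarrow> ('v \<Rightarrow> real) \<Rightarrow> ('v \<Rightarrow> real) \<Rightarrow> real" where
  "dir Q \<pi> x = (1/2) * (\<Sum>v\<in>UNIV. \<Sum>w\<in>UNIV. \<pi> v * Q v w * (x v - x w)\<^sup>2)"

lemma ip_sym: "ip \<pi> x y = ip \<pi> y x"
  unfolding ip_def by (simp add: mult.commute mult.left_commute)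

lemma ip_diff_left: "ip \<pi> (\<lambda>v. x v - y v) z = ip \<pi> x z - ip \<pi> y z"
  unfolding ip_def by (simp add: algebra_simps sum_subtractf)

lemma ip_diff_right: "ip \<pi> z (\<lambda>v. x v - y v) = ip \<pi> z x - ip \<pi> z y"
  unfolding ip_def by (simp add: algebra_simps sum_subtractf)

lemma ip_add_left: "ip \<pi> (\<lambda>v. x v + y v) z = ip \<pi> x z + ip \<pi> y z"
  unfolding ip_def by (simp add: algebra_simps sum.distrib)

lemma ip_add_right: "ip \<pi> z (\<lambda>v. x v + y v) = ip \<pi> z x + ip \<pi> z y"
  unfolding ip_def by (simp add: algebra_simps sum.distrib)

lemma ip_scale_left: "ip \<pi> (\<lambda>v. c * x v) z = c * ip \<pi> x z"
  unfolding ip_def by (simp add: algebra_simps sum_distrib_left)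

lemma ip_scale_right: "ip \<pi> z (\<lambda>v. c * x v) = c * ip \<pi> z x"
  unfolding ip_def by (simp add: algebra_simps sum_distrib_left)

lemma ip_nonneg: "(\<And>v. \<pi> v \<ge> 0) \<Longrightarrow> ip \<pi> x x \<ge> 0"
  unfolding ip_def by (intro sum_nonneg) (simp add: mult.assoc)

lemma ip_zero:
  assumes "\<And>v. \<pi> v > 0" "ip \<pi> x x = 0" shows "x v = 0"
proof -
  have "\<forall>v\<in>UNIV. \<pi> v * x v * x v = 0"
    using assms(2) unfolding ip_def
    by (subst sum_nonneg_eq_0_iff[symmetric]) (auto intro!: mult_nonneg_nonneg simp: mult.assoc less_imp_le assms(1))
  then have "\<pi> v * x v * x v = 0" by blast
  thus ?thesis using assms(1)[of v] by simp
qed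

lemma opP_diff: "opP P (\<lambda>v. x v - y v) = (\<lambda>v. opP P x v - opP P y v)"
  unfolding opP_def by (simp add: algebra_simps sum_subtractf)

lemma opP_add: "opP P (\<lambda>v. x v + y v) = (\<lambda>v. opP P x v + opP P y v)"
  unfolding opP_def by (simp add: algebra_simps sum.distrib)

lemma opP_scale: "opP P (\<lambda>v. c * x v) = (\<lambda>v. c * opP P x v)"
  unfolding opP_def by (simp add: algebra_simps sum_distrib_left)

lemma opP_const: "(\<And>v. (\<Sum>w\<in>UNIV. P v w) = 1) \<Longrightarrow> opP P (\<lambda>_. c) = (\<lambda>_. c)"
  unfolding opP_def by (simp add: sum_distrib_right[symmetric])

lemma opP_selfadj:
  assumes "reversible P \<pi>"
  shows "ip \<pi> (opP P x) y = ip \<pi> x (opP P y)"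
proof -
  have "ip \<pi> (opP P x) y = (\<Sum>v\<in>UNIV. \<Sum>w\<in>UNIV. \<pi> v * P v w * x w * y v)"
    unfolding ip_def opP_def by (simp add: sum_distrib_left sum_distrib_right algebra_simps)
  also have "\<dots> = (\<Sum>v\<in>UNIV. \<Sum>w\<in>UNIV. \<pi> w * P w v * x w * y v)"
  proof -
    have "\<pi> v * P v w = \<pi> w * P w v" for v w using assms unfolding reversible_def by blast
    then show ?thesis by simp
  qed
  also have "\<dots> = (\<Sum>w\<in>UNIV. \<Sum>v\<in>UNIV. \<pi> w * P w v * x w * y v)"
    by (rule sum.swap)
  also have "\<dots> = ip \<pi> x (opP P y)"
    unfolding ip_def opP_def by (simp add: sum_distrib_left sum_distrib_right algebra_simps)
  finally show ?thesis .
qed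

lemma opP_funpow_selfadj:
  assumes "reversible P \<pi>"
  shows "ip \<pi> ((opP P ^^ k) x) y = ip \<pi> x ((opP P ^^ k) y)"
proof (induction k arbitrary: y)
  case 0 then show ?case by simp
next
  case (Suc k)
  have "ip \<pi> ((opP P ^^ Suc k) x) y = ip \<pi> ((opP P ^^ k) x) (opP P y)"
    by (simp add: opP_selfadj[OF assms])
  also have "\<dots> = ip \<pi> x ((opP P ^^ k) (opP P y))" by (rule Suc)
  also have "\<dots> = ip \<pi> x ((opP P ^^ Suc k) y)" by (simp add: funpow_Suc_right del: funpow.simps)
  finally show ?case .
qed

lemma opP_mat_mul: "opP (mat_mul A B) x = opP A (opP B x)"
proof (rule ext)
  fix v
  have "opP (mat_mul A B) x v = (\<Sum>w\<in>UNIV. \<Sum>u\<in>UNIV. A v u * B u w * x w)"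
    unfolding opP_def mat_mul_def by (simp add: sum_distrib_right)
  also have "\<dots> = (\<Sum>u\<in>UNIV. \<Sum>w\<in>UNIV. A v u * B u w * x w)" by (rule sum.swap)
  also have "\<dots> = opP A (opP B x) v"
    unfolding opP_def by (simp add: sum_distrib_left mult.assoc)
  finally show "opP (mat_mul A B) x v = opP A (opP B x) v" .
qed

lemma opP_mat_pow: "opP (mat_pow P k) = opP P ^^ k"
proof (induction k)
  case 0
  have "(\<Sum>w\<in>UNIV. (if v = w then 1 else 0) * x w) = x v" for v and x :: "'a \<Rightarrow> real"
  proof -
    have "(\<Sum>w\<in>UNIV. (if v = w then 1 else 0) * x w) = (\<Sum>w\<in>UNIV. if v = w then x w else 0)"
      by (rule sum.cong) auto
    then show ?thesis by simp
  qed
  then show ?case by (auto simp: opP_def fun_eq_iff)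
next
  case (Suc k)
  show ?case by (rule ext) (simp add: opP_mat_mul Suc funpow_Suc_right del: funpow.simps)
qed

lemma mat_pow_nonneg: "row_stochastic P \<Longrightarrow> mat_pow P k v w \<ge> 0"
proof (induction k arbitrary: w)
  case 0 then show ?case by simp
next
  case (Suc k)
  then show ?case unfolding row_stochastic_def by (auto simp: mat_mul_def intro!: sum_nonneg)
qed

lemma mat_pow_stationary:
  assumes "stationary_dist P \<pi>"
  shows "(\<Sum>v\<in>UNIV. \<pi> v * mat_pow P k v w) = \<pi> w"
proof (induction k arbitrary: w)
  case 0
  have "(\<Sum>v\<in>UNIV. \<pi> v * (if v = w then 1 else 0)) = (\<Sum>v\<in>UNIV. if v = w then \<pi> v else 0)"
    by (rule sum.cong) auto
  then show ?case by simp
next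
  case (Suc k)
  have "(\<Sum>v\<in>UNIV. \<pi> v * mat_pow P (Suc k) v w) = (\<Sum>v\<in>UNIV. \<Sum>u\<in>UNIV. \<pi> v * mat_pow P k v u * P u w)"
    by (simp add: mat_mul_def sum_distrib_left algebra_simps)
  also have "\<dots> = (\<Sum>u\<in>UNIV. \<Sum>v\<in>UNIV. \<pi> v * mat_pow P k v u * P u w)" by (rule sum.swap)
  also have "\<dots> = (\<Sum>u\<in>UNIV. \<pi> u * P u w)"
    by (simp add: sum_distrib_right[symmetric] Suc)
  also have "\<dots> = \<pi> w" using assms unfolding stationary_dist_def by simp
  finally show ?case .
qed

lemma mat_pow_rows:
  assumes "row_stochastic P"
  shows "(\<Sum>w\<in>UNIV. mat_pow P k v w) = 1"
proof -
  have "opP (mat_pow P k) (\<lambda>_. 1) = (\<lambda>_. 1)"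
    unfolding opP_mat_pow
    by (induction k) (use assms in \<open>auto simp: row_stochastic_def opP_const\<close>)
  then show ?thesis unfolding opP_def by (drule_tac fun_cong[of _ _ v]) simp
qed

lemma pi_pos:
  assumes "irreducible P" "stationary_dist P \<pi>" "row_stochastic P"
  shows "\<pi> v > 0"
proof -
  obtain u where u: "\<pi> u > 0"
  proof (rule ccontr)
    assume "\<not> thesis" with that have "\<forall>u. \<pi> u \<le> 0" by (meson not_le)
    then have "(\<Sum>u\<in>UNIV. \<pi> u) \<le> 0" by (simp add: sum_nonpos)
    with assms(2) show False unfolding stationary_dist_def by simp
  qed
  obtain t where t: "mat_pow P t u v > 0" using assms(1) unfolding irreducible_def by blast
  have "\<pi> u * mat_pow P t u v \<le> (\<Sum>x\<in>UNIV. \<pi> x * mat_pow P t x v)"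
    by (rule member_le_sum) (use assms(2) mat_pow_nonneg[OF assms(3)] in \<open>auto intro!: mult_nonneg_nonneg simp: stationary_dist_def\<close>)
  then have "\<pi> u * mat_pow P t u v \<le> \<pi> v" using mat_pow_stationary[OF assms(2)] by simp
  moreover have "\<pi> u * mat_pow P t u v > 0" using u t by simp
  ultimately show ?thesis by simp
qed

lemma dir_eq:
  assumes rows: "\<And>v. (\<Sum>w\<in>UNIV. Q v w) = 1"
    and st: "\<And>w. (\<Sum>v\<in>UNIV. \<pi> v * Q v w) = \<pi> w"
  shows "dir Q \<pi> x = ip \<pi> x x - ip \<pi> x (opP Q x)"
proof -
  have e: "\<pi> v * Q v w * (x v - x w)\<^sup>2 = \<pi> v * Q v w * (x v)\<^sup>2 + \<pi> v * Q v w * (x w)\<^sup>2 - 2 * (\<pi> v * Q v w * x v * x w)" for v w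
    by (simp add: power2_eq_square algebra_simps)
  have s1: "(\<Sum>v\<in>UNIV. \<Sum>w\<in>UNIV. \<pi> v * Q v w * (x v)\<^sup>2) = ip \<pi> x x"
  proof -
    have "(\<Sum>w\<in>UNIV. \<pi> v * Q v w * (x v)\<^sup>2) = (\<Sum>w\<in>UNIV. Q v w) * (\<pi> v * (x v)\<^sup>2)" for v
      by (subst sum_distrib_right) (simp add: algebra_simps)
    then show ?thesis unfolding ip_def by (simp add: rows power2_eq_square mult.assoc)
  qed
  have "(\<Sum>v\<in>UNIV. \<Sum>w\<in>UNIV. \<pi> v * Q v w * (x w)\<^sup>2) = (\<Sum>w\<in>UNIV. \<Sum>v\<in>UNIV. \<pi> v * Q v w * (x w)\<^sup>2)"
    by (rule sum.swap)
  also have "\<dots> = (\<Sum>w\<in>UNIV. (\<Sum>v\<in>UNIV. \<pi> v * Q v w) * (x w)\<^sup>2)"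
    by (simp add: sum_distrib_right)
  also have "\<dots> = ip \<pi> x x"
    unfolding ip_def st by (simp add: power2_eq_square mult.assoc)
  finally have s2: "(\<Sum>v\<in>UNIV. \<Sum>w\<in>UNIV. \<pi> v * Q v w * (x w)\<^sup>2) = ip \<pi> x x" .
  have s3: "(\<Sum>v\<in>UNIV. \<Sum>w\<in>UNIV. \<pi> v * Q v w * x v * x w) = ip \<pi> x (opP Q x)"
    unfolding ip_def opP_def by (simp add: sum_distrib_left algebra_simps)
  show ?thesis unfolding dir_def e
    by (simp add: sum_subtractf sum.distrib s1 s2 s3 sum_distrib_left[symmetric])
qed

lemma dir_nonneg: "(\<And>v. \<pi> v \<ge> 0) \<Longrightarrow> (\<And>v w. Q v w \<ge> 0) \<Longrightarrow> dir Q \<pi> x \<ge> 0"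
  unfolding dir_def by (intro mult_nonneg_nonneg sum_nonneg) auto

lemma plus_nonneg:
  assumes rows: "\<And>v. (\<Sum>w\<in>UNIV. Q v w) = 1"
    and st: "\<And>w. (\<Sum>v\<in>UNIV. \<pi> v * Q v w) = \<pi> w"
    and pn: "\<And>v. \<pi> v \<ge> 0" and qn: "\<And>v w. Q v w \<ge> 0"
  shows "ip \<pi> x x + ip \<pi> x (opP Q x) \<ge> 0"
proof -
  have e: "\<pi> v * Q v w * (x v + x w)\<^sup>2 = \<pi> v * Q v w * (x v)\<^sup>2 + \<pi> v * Q v w * (x w)\<^sup>2 + 2 * (\<pi> v * Q v w * x v * x w)" for v w
    by (simp add: power2_eq_square algebra_simps)
  have s1: "(\<Sum>v\<in>UNIV. \<Sum>w\<in>UNIV. \<pi> v * Q v w * (x v)\<^sup>2) = ip \<pi> x x"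
  proof -
    have "(\<Sum>w\<in>UNIV. \<pi> v * Q v w * (x v)\<^sup>2) = (\<Sum>w\<in>UNIV. Q v w) * (\<pi> v * (x v)\<^sup>2)" for v
      by (subst sum_distrib_right) (simp add: algebra_simps)
    then show ?thesis unfolding ip_def by (simp add: rows power2_eq_square mult.assoc)
  qed
  have "(\<Sum>v\<in>UNIV. \<Sum>w\<in>UNIV. \<pi> v * Q v w * (x w)\<^sup>2) = (\<Sum>w\<in>UNIV. \<Sum>v\<in>UNIV. \<pi> v * Q v w * (x w)\<^sup>2)"
    by (rule sum.swap)
  also have "\<dots> = (\<Sum>w\<in>UNIV. (\<Sum>v\<in>UNIV. \<pi> v * Q v w) * (x w)\<^sup>2)"
    by (simp add: sum_distrib_right)
  also have "\<dots> = ip \<pi> x x"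
    unfolding ip_def st by (simp add: power2_eq_square mult.assoc)
  finally have s2: "(\<Sum>v\<in>UNIV. \<Sum>w\<in>UNIV. \<pi> v * Q v w * (x w)\<^sup>2) = ip \<pi> x x" .
  have s3: "(\<Sum>v\<in>UNIV. \<Sum>w\<in>UNIV. \<pi> v * Q v w * x v * x w) = ip \<pi> x (opP Q x)"
    unfolding ip_def opP_def by (simp add: sum_distrib_left algebra_simps)
  have "(\<Sum>v\<in>UNIV. \<Sum>w\<in>UNIV. \<pi> v * Q v w * (x v + x w)\<^sup>2) = 2 * (ip \<pi> x x + ip \<pi> x (opP Q x))"
  proof -
    have "(\<Sum>v\<in>UNIV. \<Sum>w\<in>UNIV. \<pi> v * Q v w * (x v)\<^sup>2 + \<pi> v * Q v w * (x w)\<^sup>2 + 2 * (\<pi> v * Q v w * x v * x w))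
      = (\<Sum>v\<in>UNIV. \<Sum>w\<in>UNIV. \<pi> v * Q v w * (x v)\<^sup>2) + (\<Sum>v\<in>UNIV. \<Sum>w\<in>UNIV. \<pi> v * Q v w * (x w)\<^sup>2)
        + 2 * (\<Sum>v\<in>UNIV. \<Sum>w\<in>UNIV. \<pi> v * Q v w * x v * x w)"
      by (simp only: sum.distrib sum_distrib_left)
    then show ?thesis unfolding e s1 s2 s3 by simp
  qed
  moreover have "(\<Sum>v\<in>UNIV. \<Sum>w\<in>UNIV. \<pi> v * Q v w * (x v + x w)\<^sup>2) \<ge> 0"
    by (intro sum_nonneg) (simp add: pn qn)
  ultimately show ?thesis by simp
qed

locale mc =
  fixes P :: "'v::finite \<Rightarrow> 'v \<Rightarrow> real" and \<pi> :: "'v \<Rightarrow> real"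
  assumes rs: "row_stochastic P" and irr: "irreducible P"
    and sd: "stationary_dist P \<pi>" and rev: "reversible P \<pi>"
begin

abbreviation T where "T \<equiv> opP P"
definition Dz where "Dz z = ip \<pi> z z - ip \<pi> z (T z)"

lemma rows: "(\<Sum>w\<in>UNIV. P v w) = 1" using rs unfolding row_stochastic_def by auto
lemma Pnn: "P v w \<ge> 0" using rs unfolding row_stochastic_def by auto
lemma st: "(\<Sum>v\<in>UNIV. \<pi> v * P v w) = \<pi> w" using sd unfolding stationary_dist_def by auto
lemma pipos: "\<pi> v > 0" using pi_pos[OF irr sd rs] .
lemma pinn: "\<pi> v \<ge> 0" using pipos less_imp_le by blast
lemma pisum: "(\<Sum>v\<in>UNIV. \<pi> v) = 1" using sd unfolding stationary_dist_def by auto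

lemma sa: "ip \<pi> (T x) y = ip \<pi> x (T y)" using opP_selfadj[OF rev] .

lemma Dz_dir: "Dz z = dir P \<pi> z" unfolding Dz_def by (rule dir_eq[OF rows st, symmetric])

lemma Dz_nonneg: "Dz z \<ge> 0" unfolding Dz_dir by (rule dir_nonneg[OF pinn Pnn])

lemma Dz_mono: "Dz (T z) \<le> Dz z"
proof -
  define y where "y = (\<lambda>v. z v - T z v)"
  have "0 \<le> ip \<pi> y y + ip \<pi> y (T y)" by (rule plus_nonneg[OF rows st pinn Pnn])
  moreover have "T y = (\<lambda>v. T z v - T (T z) v)" unfolding y_def by (rule opP_diff)
  ultimately have "0 \<le> ip \<pi> z z - ip \<pi> z (T z) - (ip \<pi> (T z) z - ip \<pi> (T z) (T z))
     + (ip \<pi> z (T z) - ip \<pi> z (T (T z)) - (ip \<pi> (T z) (T z) - ip \<pi> (T z) (T (T z))))"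
    unfolding y_def by (simp add: ip_diff_left ip_diff_right)
  moreover have "ip \<pi> (T z) z = ip \<pi> z (T z)" by (rule ip_sym)
  moreover have "ip \<pi> z (T (T z)) = ip \<pi> (T z) (T z)" by (rule sa[symmetric])
  ultimately show ?thesis unfolding Dz_def by linarith
qed

lemma Dz_odd: "ip \<pi> z (T z) - ip \<pi> (T z) (T z) \<le> Dz z"
proof -
  define y where "y = (\<lambda>v. z v - T z v)"
  have "0 \<le> ip \<pi> y y" by (rule ip_nonneg[OF pinn])
  then have "0 \<le> ip \<pi> z z - ip \<pi> z (T z) - (ip \<pi> (T z) z - ip \<pi> (T z) (T z))"
    unfolding y_def by (simp add: ip_diff_left ip_diff_right)
  moreover have "ip \<pi> (T z) z = ip \<pi> z (T z)" by (rule ip_sym)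
  ultimately show ?thesis unfolding Dz_def by linarith
qed

lemma Dz_pow: "Dz ((T ^^ m) u) \<le> Dz u"
proof (induction m)
  case 0 then show ?case by simp
next
  case (Suc m)
  have "Dz ((T ^^ Suc m) u) = Dz (T ((T ^^ m) u))" by simp
  also have "\<dots> \<le> Dz ((T ^^ m) u)" by (rule Dz_mono)
  finally show ?case using Suc by linarith
qed

lemma sa_pow: "ip \<pi> ((T ^^ k) x) y = ip \<pi> x ((T ^^ k) y)" by (rule opP_funpow_selfadj[OF rev])

definition sk where "sk u k = ip \<pi> u ((T ^^ k) u)"

lemma sk_step: "sk u k - sk u (Suc k) \<le> Dz u"
proof -
  have "k = k div 2 + k div 2 \<or> k = Suc (k div 2 + k div 2)" by presburger
  then obtain m where "k = m + m \<or> k = Suc (m + m)" by blast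
  then show ?thesis
  proof
    assume k: "k = m + m"
    have "sk u k = ip \<pi> u ((T ^^ m) ((T ^^ m) u))"
      unfolding sk_def k by (simp add: funpow_add)
    also have "\<dots> = ip \<pi> ((T ^^ m) u) ((T ^^ m) u)" by (rule sa_pow[symmetric])
    finally have 1: "sk u k = ip \<pi> ((T ^^ m) u) ((T ^^ m) u)" .
    have e: "Suc k = m + Suc m" using k by simp
    have "sk u (Suc k) = ip \<pi> u ((T ^^ m) (T ((T ^^ m) u)))"
      unfolding sk_def e by (simp only: funpow_add o_apply funpow.simps)
    also have "\<dots> = ip \<pi> ((T ^^ m) u) (T ((T ^^ m) u))" by (rule sa_pow[symmetric])
    finally have 2: "sk u (Suc k) = ip \<pi> ((T ^^ m) u) (T ((T ^^ m) u))" .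
    have "sk u k - sk u (Suc k) = Dz ((T ^^ m) u)" unfolding Dz_def 1 2 by simp
    then show ?thesis using Dz_pow[of m u] by simp
  next
    assume k: "k = Suc (m + m)"
    have e: "k = m + Suc m" using k by simp
    have "sk u k = ip \<pi> u ((T ^^ m) (T ((T ^^ m) u)))"
      unfolding sk_def e by (simp only: funpow_add o_apply funpow.simps)
    also have "\<dots> = ip \<pi> ((T ^^ m) u) (T ((T ^^ m) u))" by (rule sa_pow[symmetric])
    finally have 1: "sk u k = ip \<pi> ((T ^^ m) u) (T ((T ^^ m) u))" .
    have e2: "Suc k = Suc m + Suc m" using k by simp
    have "sk u (Suc k) = ip \<pi> u ((T ^^ Suc m) ((T ^^ Suc m) u))"
      unfolding sk_def e2 by (simp only: funpow_add o_apply)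
    also have "\<dots> = ip \<pi> ((T ^^ Suc m) u) ((T ^^ Suc m) u)" by (rule sa_pow[symmetric])
    finally have 2: "sk u (Suc k) = ip \<pi> (T ((T ^^ m) u)) (T ((T ^^ m) u))" by simp
    have "sk u k - sk u (Suc k) \<le> Dz ((T ^^ m) u)" unfolding 1 2 by (rule Dz_odd)
    then show ?thesis using Dz_pow[of m u] by simp
  qed
qed

lemma key: "ip \<pi> u u - ip \<pi> u ((T ^^ t) u) \<le> real t * Dz u"
proof (induction t)
  case 0 then show ?case by simp
next
  case (Suc t)
  have "sk u t - sk u (Suc t) \<le> Dz u" by (rule sk_step)
  then show ?case using Suc unfolding sk_def by (simp add: algebra_simps)
qed

end

lemma sum_pairs:
  fixes f :: "'v::finite \<Rightarrow> 'v \<Rightarrow> real"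
  shows "(\<Sum>(v,w)\<in>{(v,w). Pr v w}. f v w) = (\<Sum>v\<in>UNIV. \<Sum>w\<in>UNIV. if Pr v w then f v w else 0)"
proof -
  have "(\<Sum>v\<in>UNIV. \<Sum>w\<in>UNIV. if Pr v w then f v w else 0)
      = (\<Sum>(v,w)\<in>UNIV \<times> UNIV. if Pr v w then f v w else 0)"
    by (rule sum.cartesian_product)
  also have "\<dots> = (\<Sum>(v,w)\<in>{(v,w). Pr v w}. if Pr v w then f v w else 0)"
    by (rule sum.mono_neutral_right) (auto split: if_splits)
  also have "\<dots> = (\<Sum>(v,w)\<in>{(v,w). Pr v w}. f v w)"
    by (rule sum.cong) auto
  finally show ?thesis by simp
qed

lemma dir_scale: "dir Q \<pi> (\<lambda>v. c * u v) = c\<^sup>2 * dir Q \<pi> u"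
  unfolding dir_def by (simp add: sum_distrib_left power2_eq_square algebra_simps)

lemma wd_point:
  fixes h d c :: real
  assumes c: "c > 0"
  shows "h * d \<le> h\<^sup>2 / c / 2 + c * d\<^sup>2 / 2"
proof -
  have "0 \<le> (h - c * d)\<^sup>2 / (2 * c)" using c by simp
  also have "(h - c * d)\<^sup>2 / (2 * c) = h\<^sup>2 / c / 2 + c * d\<^sup>2 / 2 - h * d"
    using c by (simp add: field_simps power2_eq_square)
  finally show ?thesis by simp
qed

lemma flow_pair:
  fixes Q :: "'v::finite \<Rightarrow> 'v \<Rightarrow> real"
  assumes fl: "is_flow Q h" and nf: "\<And>v. net_flow h v = \<xi> v"
  shows "2 * (\<Sum>v\<in>UNIV. \<xi> v * w v) = (\<Sum>v\<in>UNIV. \<Sum>x\<in>UNIV. h v x * (w v - w x))"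
proof -
  have anti: "h v x = - h x v" for v x using fl unfolding is_flow_def by blast
  have pt: "h v x * (w v - w x) = h v x * w v + h x v * w x" for v x
    using anti[of v x] by (simp add: algebra_simps)
  have "(\<Sum>v\<in>UNIV. \<Sum>x\<in>UNIV. h v x * (w v - w x)) = (\<Sum>v\<in>UNIV. \<Sum>x\<in>UNIV. h v x * w v) + (\<Sum>v\<in>UNIV. \<Sum>x\<in>UNIV. h x v * w x)"
    unfolding pt by (simp only: sum.distrib)
  also have "(\<Sum>v\<in>UNIV. \<Sum>x\<in>UNIV. h x v * w x) = (\<Sum>x\<in>UNIV. \<Sum>v\<in>UNIV. h x v * w x)"
    by (rule sum.swap)
  also have "(\<Sum>v\<in>UNIV. \<Sum>x\<in>UNIV. h v x * w v) = (\<Sum>v\<in>UNIV. \<xi> v * w v)"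
  proof (rule sum.cong[OF refl])
    fix v
    show "(\<Sum>x\<in>UNIV. h v x * w v) = \<xi> v * w v"
      using nf[of v] unfolding net_flow_def by (simp flip: sum_distrib_right)
  qed
  finally show ?thesis by simp
qed

lemma weak_duality:
  fixes Q :: "'v::finite \<Rightarrow> 'v \<Rightarrow> real"
  assumes pp: "\<And>v. \<pi> v > 0" and qn: "\<And>v w. Q v w \<ge> 0"
    and fl: "is_flow Q h" and nf: "\<And>v. net_flow h v = \<xi> v"
  shows "2 * (\<Sum>v\<in>UNIV. \<xi> v * w v) - dir Q \<pi> w \<le> energy Q \<pi> h"
proof -
  have supp: "h v x \<noteq> 0 \<Longrightarrow> v \<noteq> x \<and> Q v x > 0" for v x using fl unfolding is_flow_def by blast
  have "2 * (\<Sum>v\<in>UNIV. \<xi> v * w v) = (\<Sum>v\<in>UNIV. \<Sum>x\<in>UNIV. h v x * (w v - w x))"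
    by (rule flow_pair[OF fl nf])
  also have "\<dots> \<le> (\<Sum>v\<in>UNIV. \<Sum>x\<in>UNIV. (if v \<noteq> x \<and> Q v x > 0 then (h v x)\<^sup>2 / (\<pi> v * Q v x) else 0) / 2
        + \<pi> v * Q v x * (w v - w x)\<^sup>2 / 2)"
  proof (intro sum_mono)
    fix v x
    show "h v x * (w v - w x) \<le> (if v \<noteq> x \<and> Q v x > 0 then (h v x)\<^sup>2 / (\<pi> v * Q v x) else 0) / 2
        + \<pi> v * Q v x * (w v - w x)\<^sup>2 / 2"
    proof (cases "v \<noteq> x \<and> Q v x > 0")
      case True
      have c: "\<pi> v * Q v x > 0" using True pp[of v] by simp
      show ?thesis using wd_point[OF c, of "h v x" "w v - w x"] True by simp
    next
      case False
      then have "h v x = 0" using supp by blast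
      moreover have "\<pi> v * Q v x * (w v - w x)\<^sup>2 \<ge> 0" using pp[of v] qn[of v x] by simp
      ultimately show ?thesis using False by simp
    qed
  qed
  also have "\<dots> = energy Q \<pi> h + dir Q \<pi> w"
  proof -
    have "(\<Sum>v\<in>UNIV. \<Sum>x\<in>UNIV. (if v \<noteq> x \<and> Q v x > 0 then (h v x)\<^sup>2 / (\<pi> v * Q v x) else 0) / 2
        + \<pi> v * Q v x * (w v - w x)\<^sup>2 / 2)
      = (\<Sum>v\<in>UNIV. \<Sum>x\<in>UNIV. (if v \<noteq> x \<and> Q v x > 0 then (h v x)\<^sup>2 / (\<pi> v * Q v x) else 0)) / 2
        + (\<Sum>v\<in>UNIV. \<Sum>x\<in>UNIV. \<pi> v * Q v x * (w v - w x)\<^sup>2) / 2"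
      by (simp only: sum.distrib sum_divide_distrib)
    then show ?thesis
      unfolding energy_def dir_def sum_pairs[where Pr = "\<lambda>v w. v \<noteq> w \<and> Q v w > 0"] by simp
  qed
  finally show ?thesis by simp
qed

context mc begin

definition flow_of where "flow_of u = (\<lambda>v w. \<pi> v * P v w * (u v - u w))"

lemma flow_of_is_flow: "is_flow P (flow_of u)"
proof -
  have 1: "\<pi> v * P v w * (u v - u w) = - (\<pi> w * P w v * (u w - u v))" for v w
  proof -
    have "\<pi> v * P v w = \<pi> w * P w v" using rev unfolding reversible_def by blast
    then show ?thesis by (simp add: algebra_simps)
  qed
  have 2: "v \<noteq> w \<and> 0 < P v w" if "\<pi> v * P v w * (u v - u w) \<noteq> 0" for v w
    using that Pnn[of v w] by (auto simp: order_le_less)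
  show ?thesis unfolding is_flow_def flow_of_def using 1 2 by blast
qed

lemma flow_of_net: "net_flow (flow_of u) v = \<pi> v * (u v - T u v)"
  unfolding net_flow_def flow_of_def opP_def
  by (simp add: algebra_simps sum_subtractf sum_distrib_left[symmetric] rows flip: sum_distrib_right)

lemma flow_of_energy: "energy P \<pi> (flow_of u) = dir P \<pi> u"
proof -
  have "energy P \<pi> (flow_of u) = (1/2) * (\<Sum>v\<in>UNIV. \<Sum>w\<in>UNIV. if v \<noteq> w \<and> P v w > 0 then (flow_of u v w)\<^sup>2 / (\<pi> v * P v w) else 0)"
    unfolding energy_def sum_pairs[where Pr = "\<lambda>v w. v \<noteq> w \<and> P v w > 0"] by simp
  also have "\<dots> = dir P \<pi> u"
    unfolding dir_def
  proof (intro arg_cong[where f = "\<lambda>x. (1/2) * x"] sum.cong refl)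
    fix v w
    show "(if v \<noteq> w \<and> P v w > 0 then (flow_of u v w)\<^sup>2 / (\<pi> v * P v w) else 0) = \<pi> v * P v w * (u v - u w)\<^sup>2"
    proof (cases "v \<noteq> w \<and> P v w > 0")
      case True
      then show ?thesis using pipos[of v] unfolding flow_of_def by (simp add: power2_eq_square field_simps)
    next
      case False
      then have "P v w = 0 \<or> v = w" using Pnn[of v w] by auto
      then show ?thesis using False by auto
    qed
  qed
  finally show ?thesis .
qed

lemma R_eff_le: "\<forall>v. net_flow (flow_of u) v = \<xi> v \<Longrightarrow> R_eff P \<pi> \<xi> \<le> ereal (dir P \<pi> u)"
  unfolding R_eff_def flow_of_energy[symmetric]
  by (rule INF_lower) (simp add: flow_of_is_flow)

end

context mc begin

lemma sumT: "(\<Sum>v\<in>UNIV. \<pi> v * T f v) = (\<Sum>v\<in>UNIV. \<pi> v * f v)"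
proof -
  have "(\<Sum>v\<in>UNIV. \<pi> v * T f v) = (\<Sum>v\<in>UNIV. \<Sum>w\<in>UNIV. \<pi> v * P v w * f w)"
    unfolding opP_def by (simp add: sum_distrib_left mult.assoc)
  also have "\<dots> = (\<Sum>w\<in>UNIV. \<Sum>v\<in>UNIV. \<pi> v * P v w * f w)" by (rule sum.swap)
  also have "\<dots> = (\<Sum>w\<in>UNIV. (\<Sum>v\<in>UNIV. \<pi> v * P v w) * f w)" by (simp add: sum_distrib_right)
  also have "\<dots> = (\<Sum>w\<in>UNIV. \<pi> w * f w)" by (simp add: st)
  finally show ?thesis .
qed

lemma sum_shift: "(\<Sum>v\<in>UNIV. \<pi> v * (f v - T f v + c)) = c"
proof -
  have "(\<Sum>v\<in>UNIV. \<pi> v * (f v - T f v + c)) = (\<Sum>v\<in>UNIV. \<pi> v * f v) - (\<Sum>v\<in>UNIV. \<pi> v * T f v) + c * (\<Sum>v\<in>UNIV. \<pi> v)"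
    by (simp add: algebra_simps sum.distrib sum_subtractf sum_distrib_left)
  then show ?thesis by (simp add: sumT pisum)
qed

lemma const_P: "Dz x = 0 \<Longrightarrow> P v w > 0 \<Longrightarrow> x v = x w"
proof -
  assume D0: "Dz x = 0" and p: "P v w > 0"
  have nn: "\<And>v w. \<pi> v * P v w * (x v - x w)\<^sup>2 \<ge> 0" using pinn Pnn by simp
  have "(\<Sum>v\<in>UNIV. \<Sum>w\<in>UNIV. \<pi> v * P v w * (x v - x w)\<^sup>2) = 0" using D0 unfolding Dz_dir dir_def by simp
  then have "\<forall>v\<in>UNIV. (\<Sum>w\<in>UNIV. \<pi> v * P v w * (x v - x w)\<^sup>2) = 0"
    by (subst sum_nonneg_eq_0_iff[symmetric]) (auto intro!: sum_nonneg nn)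
  then have "(\<Sum>w\<in>UNIV. \<pi> v * P v w * (x v - x w)\<^sup>2) = 0" by blast
  then have "\<forall>w\<in>UNIV. \<pi> v * P v w * (x v - x w)\<^sup>2 = 0"
    by (subst sum_nonneg_eq_0_iff[symmetric]) (auto intro!: nn)
  then have "\<pi> v * P v w * (x v - x w)\<^sup>2 = 0" by blast
  then show ?thesis using pipos[of v] p by simp
qed

lemma const_all: assumes "Dz x = 0" shows "x v = x w"
proof -
  have "mat_pow P t v w > 0 \<Longrightarrow> x v = x w" for t w
  proof (induction t arbitrary: w)
    case 0 then show ?case by (simp split: if_splits)
  next
    case (Suc t)
    have "0 < (\<Sum>u\<in>UNIV. mat_pow P t v u * P u w)" using Suc.prems by (simp add: mat_mul_def)
    then obtain u where "mat_pow P t v u * P u w > 0"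
      by (metis (no_types, lifting) not_le sum_nonpos)
    then have "mat_pow P t v u > 0" "P u w > 0"
      using mat_pow_nonneg[OF rs, of t v u] Pnn[of u w] by (auto simp: zero_less_mult_iff)
    then show ?case using Suc.IH const_P[OF assms] by metis
  qed
  then show ?thesis using irr unfolding irreducible_def by blast
qed

definition Lmap :: "real^'v \<Rightarrow> real^'v" where
  "Lmap x = (\<chi> v. x$v - T (\<lambda>w. x$w) v + (\<Sum>w\<in>UNIV. \<pi> w * x$w))"

lemma Lmap_linear: "linear Lmap"
proof (rule linearI)
  fix x y :: "real^'v" and c :: real
  show "Lmap (x + y) = Lmap x + Lmap y"
    unfolding Lmap_def opP_def by (simp add: vec_eq_iff algebra_simps sum.distrib)
  show "Lmap (c *\<^sub>R x) = c *\<^sub>R Lmap x"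
    unfolding Lmap_def opP_def by (simp add: vec_eq_iff algebra_simps sum_distrib_left)
qed

lemma Lmap_inj: "inj Lmap"
proof -
  have "x = 0" if "Lmap x = 0" for x
  proof -
    define f where "f = (\<lambda>w. x$w)"
    define c where "c = (\<Sum>w\<in>UNIV. \<pi> w * f w)"
    have e: "f v - T f v + c = 0" for v using that unfolding Lmap_def f_def c_def by (simp add: vec_eq_iff)
    have "c = (\<Sum>v\<in>UNIV. \<pi> v * (f v - T f v + c))" by (rule sum_shift[symmetric])
    also have "\<dots> = 0" by (simp add: e)
    finally have c0: "c = 0" .
    then have "T f = f" using e by (auto simp: fun_eq_iff)
    then have "Dz f = 0" unfolding Dz_def by simp
    then have k: "f v = f w" for v w by (rule const_all)
    obtain v0 :: 'v where True by blast
    have "c = (\<Sum>w\<in>UNIV. \<pi> w * f v0)" unfolding c_def using k by metis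
    also have "\<dots> = f v0" by (simp add: sum_distrib_right[symmetric] pisum)
    finally have "f v0 = 0" using c0 by simp
    then have "f v = 0" for v using k by metis
    then show "x = 0" unfolding f_def by (simp add: vec_eq_iff)
  qed
  then show ?thesis using Lmap_linear by (metis linear_injective_0 linear_diff right_minus_eq inj_on_def)
qed

lemma poisson:
  assumes "(\<Sum>v\<in>UNIV. \<pi> v * g v) = 0"
  shows "\<exists>u. (\<forall>v. u v - T u v = g v) \<and> (\<Sum>v\<in>UNIV. \<pi> v * u v) = 0"
proof -
  have "surj Lmap" using linear_inj_imp_surj[OF Lmap_linear Lmap_inj] .
  then obtain x where x: "Lmap x = (\<chi> v. g v)" by (metis surjE)
  define u where "u = (\<lambda>w. x$w)"
  define c where "c = (\<Sum>w\<in>UNIV. \<pi> w * u w)"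
  have e: "u v - T u v + c = g v" for v using x unfolding Lmap_def u_def c_def by (simp add: vec_eq_iff)
  have "c = (\<Sum>v\<in>UNIV. \<pi> v * (u v - T u v + c))" by (rule sum_shift[symmetric])
  also have "\<dots> = 0" by (simp add: e assms)
  finally have "c = 0" .
  then show ?thesis using e unfolding c_def by (intro exI[of _ u]) auto
qed

end

lemma quad_zero:
  fixes B C :: real
  assumes "\<forall>s. 0 \<le> 2 * s * B + s\<^sup>2 * C"
  shows "B = 0"
proof (rule ccontr)
  assume B: "B \<noteq> 0"
  define k where "k = \<bar>C\<bar> + 1"
  have k: "k > 0" "C - 2 * k < 0" unfolding k_def by auto
  define s where "s = - B / k"
  have "2 * s * B + s\<^sup>2 * C = B\<^sup>2 * (C - 2 * k) / k\<^sup>2"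
    unfolding s_def using k by (simp add: field_simps power2_eq_square)
  also have "\<dots> < 0" using B k by (simp add: divide_neg_pos mult_pos_neg)
  finally show False using assms by (metis not_le)
qed

context mc begin

lemma ip_scale2: "ip \<pi> (\<lambda>v. c * f v) (\<lambda>v. c * f v) = c\<^sup>2 * ip \<pi> f f"
  by (simp add: ip_scale_left ip_scale_right power2_eq_square)

lemma Dz_scale: "Dz (\<lambda>v. c * f v) = c\<^sup>2 * Dz f"
  unfolding Dz_dir by (rule dir_scale)

lemma ip_pos:
  assumes "\<exists>v. f v \<noteq> 0" shows "ip \<pi> f f > 0"
proof -
  obtain v where v: "f v \<noteq> 0" using assms by blast
  have "ip \<pi> f f \<ge> 0" by (rule ip_nonneg[OF pinn])
  moreover have "ip \<pi> f f \<noteq> 0"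
  proof
    assume "ip \<pi> f f = 0"
    then have "f v = 0" by (rule ip_zero[of \<pi> f v, rotated]) (rule pipos)
    with v show False by simp
  qed
  ultimately show ?thesis by simp
qed

lemma pert:
  assumes R: "\<forall>f. (\<Sum>v\<in>UNIV. \<pi> v * f v) = 0 \<longrightarrow> \<mu> * ip \<pi> f f \<le> Dz f"
    and x1: "(\<Sum>v\<in>UNIV. \<pi> v * x v) = 0" and xD: "Dz x = \<mu> * ip \<pi> x x"
  shows "T x v = (1 - \<mu>) * x v"
proof -
  have B0: "ip \<pi> x z - ip \<pi> (T x) z - \<mu> * ip \<pi> x z = 0"
    if z1: "(\<Sum>v\<in>UNIV. \<pi> v * z v) = 0" for z
  proof (rule quad_zero[where C = "Dz z - \<mu> * ip \<pi> z z"], rule allI)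
    fix s :: real
    define f where "f = (\<lambda>v. x v + s * z v)"
    have "(\<Sum>v\<in>UNIV. \<pi> v * f v) = (\<Sum>v\<in>UNIV. \<pi> v * x v) + s * (\<Sum>v\<in>UNIV. \<pi> v * z v)"
      unfolding f_def by (simp add: sum.distrib sum_distrib_left algebra_simps)
    then have "(\<Sum>v\<in>UNIV. \<pi> v * f v) = 0" using x1 z1 by simp
    then have le: "\<mu> * ip \<pi> f f \<le> Dz f" using R by blast
    have Tf: "T f = (\<lambda>v. T x v + s * T z v)" unfolding f_def by (simp add: opP_add opP_scale)
    have ipf: "ip \<pi> f f = ip \<pi> x x + 2 * s * ip \<pi> x z + s\<^sup>2 * ip \<pi> z z"
      unfolding f_def by (simp add: ip_add_left ip_add_right ip_scale_left ip_scale_right ip_sym[of \<pi> z x] power2_eq_square algebra_simps)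
    have ipTf: "ip \<pi> f (T f) = ip \<pi> x (T x) + s * ip \<pi> x (T z) + s * ip \<pi> z (T x) + s\<^sup>2 * ip \<pi> z (T z)"
      unfolding Tf unfolding f_def by (simp add: ip_add_left ip_add_right ip_scale_left ip_scale_right power2_eq_square algebra_simps)
    have "ip \<pi> x (T z) = ip \<pi> (T x) z" by (rule sa[symmetric])
    moreover have "ip \<pi> z (T x) = ip \<pi> (T x) z" by (rule ip_sym)
    ultimately have "Dz f = Dz x + 2 * s * (ip \<pi> x z - ip \<pi> (T x) z) + s\<^sup>2 * Dz z"
      unfolding Dz_def ipf ipTf by (simp add: algebra_simps)
    then show "0 \<le> 2 * s * (ip \<pi> x z - ip \<pi> (T x) z - \<mu> * ip \<pi> x z) + s\<^sup>2 * (Dz z - \<mu> * ip \<pi> z z)"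
      using le ipf xD by (simp add: algebra_simps)
  qed
  define r where "r = (\<lambda>v. x v - T x v - \<mu> * x v)"
  have "(\<Sum>v\<in>UNIV. \<pi> v * r v) = (\<Sum>v\<in>UNIV. \<pi> v * x v) - (\<Sum>v\<in>UNIV. \<pi> v * T x v) - \<mu> * (\<Sum>v\<in>UNIV. \<pi> v * x v)"
  proof -
    have "\<pi> v * r v = \<pi> v * x v - \<pi> v * T x v - \<mu> * (\<pi> v * x v)" for v
      unfolding r_def by (simp add: algebra_simps)
    then show ?thesis by (simp add: sum_subtractf sum_distrib_left)
  qed
  then have r1: "(\<Sum>v\<in>UNIV. \<pi> v * r v) = 0" using x1 sumT by simp
  have "ip \<pi> r r = ip \<pi> x r - ip \<pi> (T x) r - \<mu> * ip \<pi> x r"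
  proof -
    have "\<pi> v * r v * r v = \<pi> v * x v * r v - \<pi> v * T x v * r v - \<mu> * (\<pi> v * x v * r v)" for v
      by (simp add: r_def algebra_simps)
    then show ?thesis unfolding ip_def by (simp add: sum_subtractf sum_distrib_left)
  qed
  then have "ip \<pi> r r = 0" using B0[OF r1] by simp
  then have "r v = 0" by (rule ip_zero[of \<pi> r v, rotated]) (rule pipos)
  then show ?thesis unfolding r_def by (simp add: algebra_simps)
qed

end

context mc begin

lemma Dz_zero_fun: "Dz (\<lambda>_. 0) = 0" unfolding Dz_def ip_def by simp

lemma rayleigh:
  assumes "\<exists>y. (\<Sum>v\<in>UNIV. \<pi> v * y v) = 0 \<and> (\<exists>v. y v \<noteq> 0)"
  shows "\<exists>\<mu>>0. is_eigenvalue P (1 - \<mu>) \<and> (\<forall>f. (\<Sum>v\<in>UNIV. \<pi> v * f v) = 0 \<longrightarrow> \<mu> * ip \<pi> f f \<le> Dz f)"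
proof -
  define K where "K = sphere (0::real^'v) 1 \<inter> {x. (\<Sum>v\<in>UNIV. \<pi> v * x$v) = 0}"
  define Rq where "Rq = (\<lambda>x::real^'v. Dz (\<lambda>v. x$v) / ip \<pi> (\<lambda>v. x$v) (\<lambda>v. x$v))"
  have Kc: "compact K" unfolding K_def
    by (intro compact_Int_closed compact_sphere closed_Collect_eq continuous_intros)
  have nz: "\<exists>v. x$v \<noteq> 0" if "x \<in> K" for x
  proof (rule ccontr)
    assume "\<not> (\<exists>v. x$v \<noteq> 0)"
    then have "x = 0" by (simp add: vec_eq_iff)
    then show False using that unfolding K_def by simp
  qed
  have ipK: "ip \<pi> (\<lambda>v. x$v) (\<lambda>v. x$v) > 0" if "x \<in> K" for x
    using ip_pos nz[OF that] by blast
  have scale: "(1 / norm (\<chi> v. f v)) *\<^sub>R (\<chi> v. f v) \<in> K \<and> Rq ((1 / norm (\<chi> v. f v)) *\<^sub>R (\<chi> v. f v)) = Dz f / ip \<pi> f f"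
    if f1: "(\<Sum>v\<in>UNIV. \<pi> v * f v) = 0" and fz: "\<exists>v. f v \<noteq> 0" for f :: "'v \<Rightarrow> real"
  proof -
    define N where "N = norm (\<chi> v. f v)"
    have "(\<chi> v. f v) \<noteq> 0" using fz by (auto simp: vec_eq_iff)
    then have N: "N > 0" unfolding N_def by simp
    have e: "(\<lambda>v. ((1 / N) *\<^sub>R (\<chi> v. f v)) $ v) = (\<lambda>v. (1 / N) * f v)" by simp
    have "(\<Sum>v\<in>UNIV. \<pi> v * ((1 / N) * f v)) = (1/N) * (\<Sum>v\<in>UNIV. \<pi> v * f v)"
      by (simp add: sum_distrib_left algebra_simps)
    then have "(1 / N) *\<^sub>R (\<chi> v. f v) \<in> K" unfolding K_def using N f1 by (simp add: N_def)
    moreover have "Rq ((1 / N) *\<^sub>R (\<chi> v. f v)) = Dz f / ip \<pi> f f"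
      unfolding Rq_def e Dz_scale ip_scale2 using N by simp
    ultimately show ?thesis unfolding N_def by simp
  qed
  obtain y where y: "(\<Sum>v\<in>UNIV. \<pi> v * y v) = 0" "\<exists>v. y v \<noteq> 0" using assms by blast
  have Kne: "K \<noteq> {}" using scale[OF y] by blast
  have cont: "continuous_on K Rq"
    unfolding Rq_def Dz_def ip_def opP_def
    apply (intro continuous_intros)
    using ipK unfolding ip_def by fastforce
  obtain x0 where x0: "x0 \<in> K" "\<forall>y\<in>K. Rq x0 \<le> Rq y"
    using continuous_attains_inf[OF Kc Kne cont] by blast
  define \<mu> where "\<mu> = Rq x0"
  have R: "\<forall>f. (\<Sum>v\<in>UNIV. \<pi> v * f v) = 0 \<longrightarrow> \<mu> * ip \<pi> f f \<le> Dz f"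
  proof (intro allI impI)
    fix f :: "'v \<Rightarrow> real" assume f1: "(\<Sum>v\<in>UNIV. \<pi> v * f v) = 0"
    show "\<mu> * ip \<pi> f f \<le> Dz f"
    proof (cases "\<exists>v. f v \<noteq> 0")
      case True
      have "\<mu> \<le> Dz f / ip \<pi> f f" using scale[OF f1 True] x0(2) unfolding \<mu>_def by metis
      then show ?thesis using ip_pos[OF True] by (simp add: pos_le_divide_eq mult.commute)
    next
      case False
      then have "f = (\<lambda>_. 0)" by auto
      then show ?thesis by (simp add: Dz_zero_fun ip_def)
    qed
  qed
  define x where "x = (\<lambda>v. x0$v)"
  have x1: "(\<Sum>v\<in>UNIV. \<pi> v * x v) = 0" using x0(1) unfolding K_def x_def by simp
  have xnz: "\<exists>v. x v \<noteq> 0" using nz[OF x0(1)] unfolding x_def .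
  have ipx: "ip \<pi> x x > 0" using ipK[OF x0(1)] unfolding x_def .
  have xD: "Dz x = \<mu> * ip \<pi> x x" unfolding \<mu>_def Rq_def x_def[symmetric] using ipx by simp
  have Tx: "T x v = (1 - \<mu>) * x v" for v by (rule pert[OF R x1 xD])
  have "Dz x \<noteq> 0"
  proof
    assume "Dz x = 0"
    then have k: "x v = x w" for v w by (rule const_all)
    obtain v0 :: 'v where True by blast
    have "(\<Sum>v\<in>UNIV. \<pi> v * x v) = (\<Sum>v\<in>UNIV. \<pi> v * x v0)" using k by metis
    also have "\<dots> = x v0" by (simp add: sum_distrib_right[symmetric] pisum)
    finally have "x v0 = 0" using x1 by simp
    then show False using xnz k by metis
  qed
  then have "Dz x > 0" using Dz_nonneg[of x] by simp
  then have mu: "\<mu> > 0" using xD ipx by (simp add: zero_less_mult_iff)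
  have "is_eigenvalue P (1 - \<mu>)"
    unfolding is_eigenvalue_def using xnz Tx unfolding opP_def by blast
  then show ?thesis using mu R by blast
qed

lemma eig_finite: "finite {lam. is_eigenvalue P lam}"
proof -
  define S where "S = {lam. is_eigenvalue P lam}"
  define e where "e lam = (SOME x. (\<exists>v. x v \<noteq> 0) \<and> (\<forall>v. T x v = lam * x v))" for lam
  have eS: "(\<exists>v. e lam v \<noteq> 0) \<and> (\<forall>v. T (e lam) v = lam * e lam v)" if "lam \<in> S" for lam
  proof -
    have "\<exists>x. (\<exists>v. x v \<noteq> 0) \<and> (\<forall>v. T x v = lam * x v)"
      using that unfolding S_def is_eigenvalue_def opP_def by simp
    then show ?thesis unfolding e_def by (rule someI_ex)
  qed
  have orth: "ip \<pi> (e a) (e b) = 0" if "a \<in> S" "b \<in> S" "a \<noteq> b" for a b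
  proof -
    have Ta: "T (e a) = (\<lambda>v. a * e a v)" using eS[OF that(1)] by auto
    have Tb: "T (e b) = (\<lambda>v. b * e b v)" using eS[OF that(2)] by auto
    have "a * ip \<pi> (e a) (e b) = ip \<pi> (T (e a)) (e b)" unfolding Ta by (simp add: ip_scale_left)
    also have "\<dots> = ip \<pi> (e a) (T (e b))" by (rule sa)
    also have "\<dots> = b * ip \<pi> (e a) (e b)" unfolding Tb by (simp add: ip_scale_right)
    finally show ?thesis using that(3) by simp
  qed
  define \<phi> where "\<phi> lam = (\<chi> v. sqrt (\<pi> v) * e lam v)" for lam
  have inn: "\<phi> a \<bullet> \<phi> b = ip \<pi> (e a) (e b)" for a b
  proof -
    have s0: "sqrt (\<pi> v) * sqrt (\<pi> v) = \<pi> v" for v using pinn[of v] by simp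
    have s: "(sqrt (\<pi> i) * x) * (sqrt (\<pi> i) * y) = \<pi> i * x * y" for i x y
    proof -
      have "(sqrt (\<pi> i) * x) * (sqrt (\<pi> i) * y) = (sqrt (\<pi> i) * sqrt (\<pi> i)) * x * y" by (simp only: ac_simps)
      then show ?thesis using s0 by simp
    qed
    have "\<phi> a \<bullet> \<phi> b = (\<Sum>i\<in>UNIV. (sqrt (\<pi> i) * e a i) * (sqrt (\<pi> i) * e b i))"
      unfolding \<phi>_def inner_vec_def by simp
    also have "\<dots> = ip \<pi> (e a) (e b)" unfolding ip_def by (rule sum.cong[OF refl], rule s)
    finally show ?thesis .
  qed
  have pos: "\<phi> a \<bullet> \<phi> a > 0" if "a \<in> S" for a unfolding inn using ip_pos eS[OF that] by blast
  have inj: "inj_on \<phi> S"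
  proof (rule inj_onI)
    fix a b assume "a \<in> S" "b \<in> S" "\<phi> a = \<phi> b"
    then show "a = b" using pos[of a] orth[of a b] inn[of a b] by (metis less_irrefl)
  qed
  have "pairwise orthogonal (\<phi> ` S)"
    unfolding pairwise_def orthogonal_def using orth inn by fastforce
  moreover have "0 \<notin> \<phi> ` S" using pos by fastforce
  ultimately have "independent (\<phi> ` S)" by (rule pairwise_orthogonal_independent)
  then have "finite (\<phi> ` S)" using independent_bound by blast
  then show ?thesis using finite_imageD inj unfolding S_def by blast
qed

end

context mc begin

lemma main:
  assumes xi: "(\<Sum>v\<in>UNIV. \<xi> v) = 0"
  shows "(\<forall>t::nat. t \<ge> 1 \<longrightarrow> R_eff P \<pi> \<xi> \<le> ereal (real t) * R_eff (mat_pow P t) \<pi> \<xi>)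
    \<and> R_eff P \<pi> \<xi> \<le> ereal ((\<Sum>v\<in>UNIV. (\<xi> v / sqrt (\<pi> v))\<^sup>2) / spectral_gap P)"
proof -
  define g where "g v = \<xi> v / \<pi> v" for v
  have pg: "\<pi> v * g v = \<xi> v" for v unfolding g_def using pipos[of v] by simp
  have g1: "(\<Sum>v\<in>UNIV. \<pi> v * g v) = 0" unfolding pg using xi .
  obtain u where u: "\<And>v. u v - T u v = g v" and u1: "(\<Sum>v\<in>UNIV. \<pi> v * u v) = 0"
    using poisson[OF g1] by blast
  define a where "a = Dz u"
  have a_ip: "a = ip \<pi> u g"
  proof -
    have "(\<lambda>v. u v - T u v) = g" using u by auto
    then have "ip \<pi> u g = ip \<pi> u u - ip \<pi> u (T u)" using ip_diff_right[of \<pi> u u "T u"] by simp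
    then show ?thesis unfolding a_def Dz_def by simp
  qed
  have a_xi: "(\<Sum>v\<in>UNIV. \<xi> v * u v) = a"
  proof -
    have pt: "\<pi> v * u v * g v = \<xi> v * u v" for v
    proof -
      have "\<pi> v * u v * g v = (\<pi> v * g v) * u v" by (simp only: ac_simps)
      then show ?thesis unfolding pg .
    qed
    show ?thesis unfolding a_ip ip_def by (rule sum.cong[OF refl], rule pt[symmetric])
  qed
  have net: "\<forall>v. net_flow (flow_of u) v = \<xi> v" using flow_of_net u pg by simp
  have Ra: "R_eff P \<pi> \<xi> \<le> ereal a" using R_eff_le[OF net] unfolding a_def Dz_dir .
  have a0: "a \<ge> 0" unfolding a_def by (rule Dz_nonneg)
  have part1: "R_eff P \<pi> \<xi> \<le> ereal (real t) * R_eff (mat_pow P t) \<pi> \<xi>" if t: "t \<ge> 1" for t :: nat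
  proof -
    define Q where "Q = mat_pow P t"
    have tpos: "real t > 0" using t by simp
    have dirQ: "dir Q \<pi> u \<le> real t * a"
    proof -
      have "dir Q \<pi> u = ip \<pi> u u - ip \<pi> u (opP Q u)" unfolding Q_def
        by (rule dir_eq[OF mat_pow_rows[OF rs] mat_pow_stationary[OF sd]])
      also have "\<dots> = ip \<pi> u u - ip \<pi> u ((T ^^ t) u)" unfolding Q_def opP_mat_pow ..
      also have "\<dots> \<le> real t * a" unfolding a_def by (rule key)
      finally show ?thesis .
    qed
    have "ereal (a / real t) \<le> R_eff Q \<pi> \<xi>"
      unfolding R_eff_def
    proof (rule INF_greatest)
      fix h assume "h \<in> {f. is_flow Q f \<and> (\<forall>v. net_flow f v = \<xi> v)}"
      then have fl: "is_flow Q h" and nf: "\<And>v. net_flow h v = \<xi> v" by auto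
      have wd: "2 * (\<Sum>v\<in>UNIV. \<xi> v * ((1 / real t) * u v)) - dir Q \<pi> (\<lambda>v. (1 / real t) * u v) \<le> energy Q \<pi> h"
        by (rule weak_duality[OF pipos _ fl nf]) (simp add: Q_def mat_pow_nonneg[OF rs])
      have s1: "(\<Sum>v\<in>UNIV. \<xi> v * ((1 / real t) * u v)) = a / real t"
        using a_xi by (simp add: sum_divide_distrib[symmetric] algebra_simps)
      have s2: "dir Q \<pi> (\<lambda>v. (1 / real t) * u v) \<le> a / real t"
      proof -
        have "dir Q \<pi> (\<lambda>v. (1 / real t) * u v) = (1 / real t)\<^sup>2 * dir Q \<pi> u" by (rule dir_scale)
        also have "\<dots> \<le> (1 / real t)\<^sup>2 * (real t * a)" by (rule mult_left_mono[OF dirQ]) simp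
        also have "\<dots> = a / real t" using tpos by (simp add: power2_eq_square field_simps)
        finally show ?thesis .
      qed
      show "ereal (a / real t) \<le> ereal (energy Q \<pi> h)" using wd s1 s2 by simp
    qed
    then have "ereal (real t) * ereal (a / real t) \<le> ereal (real t) * R_eff Q \<pi> \<xi>"
      by (rule ereal_mult_left_mono) simp
    moreover have "ereal (real t) * ereal (a / real t) = ereal a" using tpos by simp
    ultimately show ?thesis using Ra unfolding Q_def by simp
  qed
  have ipgg: "ip \<pi> g g = (\<Sum>v\<in>UNIV. (\<xi> v / sqrt (\<pi> v))\<^sup>2)"
    unfolding ip_def
  proof (rule sum.cong[OF refl])
    fix v
    have p: "\<pi> v > 0" by (rule pipos)
    show "\<pi> v * g v * g v = (\<xi> v / sqrt (\<pi> v))\<^sup>2"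
      unfolding g_def using p by (simp add: power_divide power2_eq_square field_simps)
  qed
  have part2: "a \<le> ip \<pi> g g / spectral_gap P"
  proof (cases "\<exists>v. g v \<noteq> 0")
    case False
    then have "g = (\<lambda>_. 0)" by auto
    then have "a = 0" unfolding a_ip ip_def by simp
    moreover have "ip \<pi> g g = 0" using \<open>g = (\<lambda>_. 0)\<close> unfolding ip_def by simp
    ultimately show ?thesis by simp
  next
    case True
    obtain \<mu> where mu: "\<mu> > 0" "is_eigenvalue P (1 - \<mu>)"
      and R: "\<forall>f. (\<Sum>v\<in>UNIV. \<pi> v * f v) = 0 \<longrightarrow> \<mu> * ip \<pi> f f \<le> Dz f"
      using rayleigh g1 True by blast
    define EV where "EV = {lam. is_eigenvalue P lam \<and> lam < 1}"
    have fin: "finite EV" unfolding EV_def by (rule finite_subset[OF _ eig_finite]) auto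
    have mem: "1 - \<mu> \<in> EV" unfolding EV_def using mu by simp
    have "Max EV \<in> EV" using fin mem by (intro Max_in) auto
    then have M1: "Max EV < 1" unfolding EV_def by simp
    have M2: "1 - \<mu> \<le> Max EV" using fin mem by (rule Max_ge)
    define \<delta> where "\<delta> = spectral_gap P"
    have d: "\<delta> = 1 - Max EV" unfolding \<delta>_def spectral_gap_def EV_def ..
    have dpos: "\<delta> > 0" and dmu: "\<delta> \<le> \<mu>" using M1 M2 d by auto
    have uu: "ip \<pi> u u \<ge> 0" by (rule ip_nonneg[OF pinn])
    have "\<mu> * ip \<pi> u u \<le> a" using R u1 unfolding a_def by blast
    moreover have "\<delta> * ip \<pi> u u \<le> \<mu> * ip \<pi> u u" using dmu uu by (rule mult_right_mono)
    ultimately have du: "\<delta> * ip \<pi> u u \<le> a" by linarith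
    have "0 \<le> ip \<pi> (\<lambda>v. \<delta> * u v - g v) (\<lambda>v. \<delta> * u v - g v)" by (rule ip_nonneg[OF pinn])
    also have "\<dots> = \<delta>\<^sup>2 * ip \<pi> u u - 2 * \<delta> * ip \<pi> u g + ip \<pi> g g"
      by (simp add: ip_diff_left ip_diff_right ip_scale_left ip_scale_right ip_sym[of \<pi> g u] power2_eq_square algebra_simps)
    finally have "2 * \<delta> * a \<le> \<delta> * (\<delta> * ip \<pi> u u) + ip \<pi> g g" unfolding a_ip by (simp add: power2_eq_square algebra_simps)
    moreover have "\<delta> * (\<delta> * ip \<pi> u u) \<le> \<delta> * a" using du dpos by (simp add: mult_left_mono)
    ultimately have "\<delta> * a \<le> ip \<pi> g g" by linarith
    then show ?thesis unfolding \<delta>_def[symmetric] using dpos by (simp add: pos_le_divide_eq mult.commute)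
  qed
  show ?thesis using part1 Ra part2 ipgg by (auto intro: order_trans)
qed

end

theorem lemma3p2:
  fixes P :: "'v::finite \<Rightarrow> 'v \<Rightarrow> real" and \<pi> \<xi> :: "'v \<Rightarrow> real"
  assumes "row_stochastic P" and "irreducible P"
    and "stationary_dist P \<pi>" and "reversible P \<pi>"
    and "(\<Sum>v\<in>UNIV. \<xi> v) = 0"
  shows "(\<forall>t::nat. t \<ge> 1 \<longrightarrow> R_eff P \<pi> \<xi> \<le> ereal (real t) * R_eff (mat_pow P t) \<pi> \<xi>)
    \<and> R_eff P \<pi> \<xi> \<le> ereal ((\<Sum>v\<in>UNIV. (\<xi> v / sqrt (\<pi> v))\<^sup>2) / spectral_gap P)"
proof -
  interpret mc P \<pi> using assms(1-4) by unfold_locales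
  show ?thesis using main[OF assms(5)] .
qed


end
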